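(* Let $\{\Psi^{(j)}\}_{j\ge0}$ be a sequence of Harris ergodic Markov chains, chain $j$ having transition function $K_j$ and invariant probability measure $\Pi_j$. Suppose that for each $j$ there are a function $V_j\ge0$, numbers $\lambda^{(j)}<1$, $L^{(j)}<\infty$, $\varepsilon^{(j)}>0$, $d^{(j)}>2L^{(j)}/(1-\lambda^{(j)})$ and a probability measure $Q_j$ with $\int V_j(x')K_j(x,dx')\le\lambda^{(j)}V_j(x)+L^{(j)}$ for all $x$ and $K_j(x,\cdot)\ge\varepsilon^{(j)}Q_j(\cdot)$ whenever $V_j(x)<d^{(j)}$, and let $\hat\rho^{(j)}=(1-\varepsilon^{(j)})^{r_j}\vee\Big(\frac{1+2L^{(j)}+\lambda^{(j)}d^{(j)}}{1+d^{(j)}}\Big)^{1-r_j}\{1+2(\lambda^{(j)}d^{(j)}+L^{(j)})\}^{r_j}$ for some $r_j\in(0,1)$ chosen so that $\hat\rho^{(j)}<1$. Suppose there is a subsequence $\{j_l\}$ along which at least one of the following holds: (i) $\lambda^{(j_l)}\to1$; (ii) $L^{(j_l)}\to\infty$, while $\varepsilon^{(j_l)}$ is bounded away from 1 and $\lambda^{(j_l)}$ is bounded away from 0; (iii) $\varepsilon^{(j_l)}\to0$. Then $\hat\rho^{(j_l)}\to1$. *)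

theory Defs
  imports "HOL-Probability.Probability"
begin

definition markov_kernel :: "'a measure \<Rightarrow> ('a \<Rightarrow> 'a measure) \<Rightarrow> bool" where
  "markov_kernel M K \<longleftrightarrow> K \<in> M \<rightarrow>\<^sub>M prob_algebra M"

definition invariant_prob :: "'a measure \<Rightarrow> ('a \<Rightarrow> 'a measure) \<Rightarrow> 'a measure \<Rightarrow> bool" where
  "invariant_prob M K P \<longleftrightarrow> prob_space P \<and> sets P = sets M \<and>
     (\<forall>A\<in>sets M. emeasure P A = (\<integral>\<^sup>+ x. emeasure (K x) A \<partial>P))"

text \<open>hit_prob K A n x = probability, starting from x, that the chain visits A at some
  time k with 1 \<le> k \<le> n.\<close>
fun hit_prob :: "('a \<Rightarrow> 'a measure) \<Rightarrow> 'a set \<Rightarrow> nat \<Rightarrow> 'a \<Rightarrow> ennreal" where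
  "hit_prob K A 0 x = 0"
| "hit_prob K A (Suc n) x =
     emeasure (K x) A + (\<integral>\<^sup>+ y. indicator (space (K x) - A) y * hit_prob K A n y \<partial>K x)"

text \<open>L(x,A) = P_x(tau_A < infinity), tau_A the first return time to A.\<close>
definition return_prob :: "('a \<Rightarrow> 'a measure) \<Rightarrow> 'a set \<Rightarrow> 'a \<Rightarrow> ennreal" where
  "return_prob K A x = (SUP n. hit_prob K A n x)"

text \<open>Harris recurrence: there is a nontrivial sigma-finite measure psi such that every
  set of positive psi-measure is reached with probability one from every starting point
  (this includes psi-irreducibility).\<close>
definition harris_recurrent :: "'a measure \<Rightarrow> ('a \<Rightarrow> 'a measure) \<Rightarrow> bool" where
  "harris_recurrent M K \<longleftrightarrow>
     (\<exists>\<psi>. sigma_finite_measure \<psi> \<and> sets \<psi> = sets M \<and> emeasure \<psi> (space M) > 0 \<and>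
        (\<forall>A\<in>sets M. emeasure \<psi> A > 0 \<longrightarrow> (\<forall>x\<in>space M. return_prob K A x = 1)))"

text \<open>Aperiodicity (Roberts--Rosenthal): no cyclic decomposition of period d \<ge> 2.\<close>
definition aperiodic :: "'a measure \<Rightarrow> ('a \<Rightarrow> 'a measure) \<Rightarrow> 'a measure \<Rightarrow> bool" where
  "aperiodic M K P \<longleftrightarrow>
     \<not> (\<exists>d::nat. d \<ge> 2 \<and> (\<exists>D::nat \<Rightarrow> 'a set.
          (\<forall>i<d. D i \<in> sets M) \<and> disjoint_family_on D {..<d} \<and> emeasure P (D 0) > 0 \<and>
          (\<forall>i<d. \<forall>x\<in>D i. measure (K x) (D (Suc i mod d)) = 1)))"

text \<open>Harris ergodic: Markov kernel with an invariant probability measure, Harris recurrent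
  (hence positive Harris recurrent) and aperiodic.\<close>
definition harris_ergodic :: "'a measure \<Rightarrow> ('a \<Rightarrow> 'a measure) \<Rightarrow> 'a measure \<Rightarrow> bool" where
  "harris_ergodic M K P \<longleftrightarrow>
     markov_kernel M K \<and> invariant_prob M K P \<and> harris_recurrent M K \<and> aperiodic M K P"

definition rho_hat :: "real \<Rightarrow> real \<Rightarrow> real \<Rightarrow> real \<Rightarrow> real \<Rightarrow> real" where
  "rho_hat \<epsilon> lam L d r =
     max ((1 - \<epsilon>) powr r)
         (((1 + 2 * L + lam * d) / (1 + d)) powr (1 - r) * (1 + 2 * (lam * d + L)) powr r)"

end

theory Submission
  imports Defs
begin


lemma L_nonneg_abs:
  fixes V :: "'a \<Rightarrow> real"
  assumes "S \<noteq> {}" "\<And>x. x \<in> S \<Longrightarrow> V x \<ge> 0" "lam < 1"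
    "\<And>x. x \<in> S \<Longrightarrow> Inf (V ` S) \<le> lam * V x + L"
  shows "L \<ge> 0"
proof -
  define m where "m = Inf (V ` S)"
  have m0: "m \<ge> 0" unfolding m_def using assms(1,2) by (auto intro!: cINF_greatest)
  show ?thesis
  proof (cases "lam \<le> 0")
    case True
    obtain x where x: "x \<in> S" using assms(1) by auto
    have "m \<le> lam * V x + L" using assms(4)[OF x] m_def by simp
    moreover have "lam * V x \<le> 0" using True assms(2)[OF x] by (simp add: mult_nonpos_nonneg)
    ultimately show ?thesis using m0 by linarith
  next
    case False
    have "\<And>x. x \<in> S \<Longrightarrow> (m - L) / lam \<le> V x"
    proof -
      fix x assume x: "x \<in> S"
      have "m - L \<le> lam * V x" using assms(4)[OF x] m_def by simp
      then show "(m - L) / lam \<le> V x" using False by (simp add: divide_simps mult.commute)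
    qed
    then have "(m - L) / lam \<le> m" unfolding m_def using assms(1) by (auto intro!: cINF_greatest)
    then have "m - L \<le> lam * m" using False by (simp add: divide_simps mult.commute)
    moreover have "(1 - lam) * m \<ge> 0" using m0 assms(3) by simp
    ultimately show ?thesis by (simp add: algebra_simps)
  qed
qed

lemma rho_ge_lam:
  assumes "0 < lam" "lam < 1" "0 \<le> L" "0 < d" "0 < r" "r < 1"
  shows "lam \<le> rho_hat eps lam L d r"
proof -
  define X where "X = (1 + 2 * L + lam * d) / (1 + d)"
  define Y where "Y = 1 + 2 * (lam * d + L)"
  have Y1: "Y \<ge> 1" using assms unfolding Y_def by simp
  have "lam * (1 + d) \<le> 1 + 2 * L + lam * d" using assms by (simp add: distrib_left)
  then have Xl: "X \<ge> lam" unfolding X_def using assms by (simp add: pos_le_divide_eq)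
  have Xp: "X > 0" using Xl assms by simp
  have "Y powr r \<ge> 1" using Y1 assms by (simp add: ge_one_powr_ge_zero)
  have "X powr (1 - r) \<ge> lam"
  proof (cases "X \<ge> 1")
    case True
    then have "X powr (1 - r) \<ge> 1" using assms by (simp add: ge_one_powr_ge_zero)
    then show ?thesis using assms by simp
  next
    case False
    have "X powr 1 \<le> X powr (1 - r)" using False Xp assms by (intro powr_mono') auto
    then show ?thesis using Xl Xp by simp
  qed
  moreover have "X powr (1 - r) * 1 \<le> X powr (1 - r) * Y powr r"
    using \<open>Y powr r \<ge> 1\<close> by (intro mult_left_mono) auto
  ultimately have "lam \<le> X powr (1 - r) * Y powr r" by simp
  then show ?thesis unfolding rho_hat_def X_def Y_def by simp
qed

lemma rho_ge_eps:
  assumes "0 < eps" "eps < 1" "0 < r" "r < 1"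
  shows "1 - eps \<le> rho_hat eps lam L d r"
proof -
  have "(1 - eps) powr 1 \<le> (1 - eps) powr r" using assms by (intro powr_mono') auto
  then show ?thesis unfolding rho_hat_def using assms by simp
qed

lemma rho_ge_c:
  assumes "eps \<le> c" "c < 1" "0 < r"
  shows "(1 - c) powr r \<le> rho_hat eps lam L d r"
proof -
  have "(1 - c) powr r \<le> (1 - eps) powr r" using assms by (intro powr_mono2) auto
  then show ?thesis unfolding rho_hat_def by simp
qed

lemma r_bound:
  assumes "0 < c" "c \<le> lam" "lam < 1" "0 < L" "0 < d" "0 < r" "r < 1"
    "rho_hat eps lam L d r < 1"
  shows "r \<le> - ln c / ln (1 + 2 * L)"
proof -
  define X where "X = (1 + 2 * L + lam * d) / (1 + d)"
  define Y where "Y = 1 + 2 * (lam * d + L)"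
  have "lam * (1 + d) \<le> 1 + 2 * L + lam * d" using assms by (simp add: distrib_left)
  then have Xl: "X \<ge> lam" unfolding X_def using assms by (simp add: pos_le_divide_eq)
  have Yl: "Y \<ge> 1 + 2 * L" unfolding Y_def using assms by simp
  have B: "X powr (1 - r) * Y powr r < 1" using assms(8) unfolding rho_hat_def X_def Y_def by simp
  have "c powr (1 - r) \<le> X powr (1 - r)" using assms Xl by (intro powr_mono2) auto
  moreover have "c \<le> c powr (1 - r)"
  proof -
    have "c powr 1 \<le> c powr (1 - r)" using assms by (intro powr_mono') auto
    then show ?thesis using assms by simp
  qed
  moreover have "(1 + 2 * L) powr r \<le> Y powr r" using assms Yl by (intro powr_mono2) auto
  ultimately have "c * (1 + 2 * L) powr r < 1" using B
    by (smt (verit, best) mult_mono powr_ge_zero assms(1))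
  then have "(1 + 2 * L) powr r < 1 / c" using assms by (simp add: divide_simps mult.commute)
  then have "ln ((1 + 2 * L) powr r) < ln (1 / c)" using assms by (subst ln_less_cancel_iff) auto
  then have "r * ln (1 + 2 * L) < - ln c" using assms by (simp add: ln_powr ln_div)
  moreover have "ln (1 + 2 * L) > 0" using assms by simp
  ultimately show ?thesis by (simp add: divide_simps mult.commute)
qed


lemma L_nonneg_chain:
  assumes erg: "harris_ergodic M K P"
    and V_nonneg: "\<And>x. x \<in> space M \<Longrightarrow> V x \<ge> 0"
    and lam_lt: "lam < 1"
    and drift: "\<And>x. x \<in> space M \<Longrightarrow>
                  integrable (K x) V \<and> (\<integral>y. V y \<partial>(K x)) \<le> lam * V x + L"
  shows "L \<ge> (0::real)"
proof (rule L_nonneg_abs[of "space M" V lam])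
  show "space M \<noteq> {}"
  proof
    assume e: "space M = {}"
    from erg obtain \<psi> where "sets \<psi> = sets M" "emeasure \<psi> (space M) > 0"
      unfolding harris_ergodic_def harris_recurrent_def by auto
    then show False using e by simp
  qed
  show "\<And>x. x \<in> space M \<Longrightarrow> V x \<ge> 0" by fact
  show "lam < 1" by fact
  fix x assume x: "x \<in> space M"
  have "K \<in> M \<rightarrow>\<^sub>M prob_algebra M" using erg unfolding harris_ergodic_def markov_kernel_def by auto
  then have "K x \<in> space (prob_algebra M)" using x by (rule measurable_space)
  then have ps: "prob_space (K x)" and se: "sets (K x) = sets M" by (auto simp: space_prob_algebra)
  have sp: "space (K x) = space M" using se by (rule sets_eq_imp_space_eq)
  have bdd: "bdd_below (V ` space M)" by (rule bdd_belowI2[of _ 0]) (rule V_nonneg)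
  have "Inf (V ` space M) \<le> (\<integral>y. V y \<partial>(K x))"
    using ps drift[OF x] by (intro prob_space.integral_ge_const) (auto simp: sp intro!: cInf_lower bdd)
  then show "Inf (V ` space M) \<le> lam * V x + L" using drift[OF x] by linarith
qed



theorem proposition1:
  fixes M :: "nat \<Rightarrow> 'a measure"
    and K :: "nat \<Rightarrow> 'a \<Rightarrow> 'a measure"
    and Pinv :: "nat \<Rightarrow> 'a measure"
    and Q :: "nat \<Rightarrow> 'a measure"
    and V :: "nat \<Rightarrow> 'a \<Rightarrow> real"
    and lam L eps d r :: "nat \<Rightarrow> real"
    and js :: "nat \<Rightarrow> nat"
  assumes erg: "\<And>j. harris_ergodic (M j) (K j) (Pinv j)"
    and V_meas: "\<And>j. V j \<in> borel_measurable (M j)"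
    and V_nonneg: "\<And>j x. x \<in> space (M j) \<Longrightarrow> V j x \<ge> 0"
    and lam_lt: "\<And>j. lam j < 1"
    and eps_pos: "\<And>j. eps j > 0"
    and d_gt: "\<And>j. d j > 2 * L j / (1 - lam j)"
    and Q_prob: "\<And>j. prob_space (Q j)" and Q_sets: "\<And>j. sets (Q j) = sets (M j)"
    and drift: "\<And>j x. x \<in> space (M j) \<Longrightarrow>
                  integrable (K j x) (V j) \<and>
                  (\<integral>y. V j y \<partial>(K j x)) \<le> lam j * V j x + L j"
    and minor: "\<And>j x A. x \<in> space (M j) \<Longrightarrow> V j x < d j \<Longrightarrow> A \<in> sets (M j) \<Longrightarrow>
                  measure (K j x) A \<ge> eps j * measure (Q j) A"
    and r_range: "\<And>j. 0 < r j \<and> r j < 1"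
    and rho_lt: "\<And>j. rho_hat (eps j) (lam j) (L j) (d j) (r j) < 1"
    and subseq: "strict_mono js"
    and cases:
      "((\<lambda>l. lam (js l)) \<longlonglongrightarrow> 1) \<or>
       (filterlim (\<lambda>l. L (js l)) at_top sequentially \<and>
          (\<exists>c<1. \<forall>l. eps (js l) \<le> c) \<and> (\<exists>c>0. \<forall>l. lam (js l) \<ge> c)) \<or>
       ((\<lambda>l. eps (js l)) \<longlonglongrightarrow> 0)"
  shows "(\<lambda>l. rho_hat (eps (js l)) (lam (js l)) (L (js l)) (d (js l)) (r (js l))) \<longlonglongrightarrow> 1"
  proof -
  have Lnn: "L j \<ge> 0" for j
    by (rule L_nonneg_chain[OF erg V_nonneg lam_lt drift])
  have dpos: "d j > 0" for j
  proof -
    have "2 * L j / (1 - lam j) \<ge> 0" using Lnn[of j] lam_lt[of j] by simp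
    then show ?thesis using d_gt[of j] by linarith
  qed
  define rho where "rho l = rho_hat (eps (js l)) (lam (js l)) (L (js l)) (d (js l)) (r (js l))" for l
  have up: "eventually (\<lambda>l. rho l \<le> 1) sequentially"
    using rho_lt by (auto simp: rho_def less_imp_le)
  have "rho \<longlonglongrightarrow> 1"
    using cases
  proof (elim disjE conjE exE)
    assume lim: "(\<lambda>l. lam (js l)) \<longlonglongrightarrow> 1"
    have "eventually (\<lambda>l. lam (js l) > 0) sequentially"
      using order_tendstoD(1)[OF lim, of 0] by simp
    then have "eventually (\<lambda>l. lam (js l) \<le> rho l) sequentially"
      by eventually_elim (use lam_lt r_range Lnn dpos in \<open>auto simp: rho_def intro!: rho_ge_lam\<close>)
    then show ?thesis by (rule tendsto_sandwich[OF _ up lim tendsto_const])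
  next
    assume lim: "(\<lambda>l. eps (js l)) \<longlonglongrightarrow> 0"
    have "eventually (\<lambda>l. eps (js l) < 1) sequentially"
      using order_tendstoD(2)[OF lim, of 1] by simp
    then have "eventually (\<lambda>l. 1 - eps (js l) \<le> rho l) sequentially"
      by eventually_elim (use eps_pos r_range in \<open>auto simp: rho_def intro!: rho_ge_eps\<close>)
    moreover have "(\<lambda>l. 1 - eps (js l)) \<longlonglongrightarrow> 1"
      using tendsto_diff[OF tendsto_const lim, of 1] by simp
    ultimately show ?thesis by (rule tendsto_sandwich[OF _ up _ tendsto_const])
  next
    fix c' c
    assume Ltop: "filterlim (\<lambda>l. L (js l)) at_top sequentially"
      and c': "c' < 1" "\<forall>l. eps (js l) \<le> c'" and c: "c > 0" "\<forall>l. lam (js l) \<ge> c"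
    have Lpos: "eventually (\<lambda>l. L (js l) > 0) sequentially"
      using Ltop by (simp add: filterlim_at_top_dense)
    have "filterlim (\<lambda>l. 1 + 2 * L (js l)) at_top sequentially"
      by (rule filterlim_tendsto_add_at_top[OF tendsto_const])
         (rule filterlim_tendsto_pos_mult_at_top[OF tendsto_const _ Ltop]; simp)
    then have "filterlim (\<lambda>l. ln (1 + 2 * L (js l))) at_top sequentially"
      by (rule filterlim_compose[OF ln_at_top])
    then have ub: "(\<lambda>l. - ln c / ln (1 + 2 * L (js l))) \<longlonglongrightarrow> 0"
      by (intro tendsto_divide_0[OF tendsto_const] filterlim_at_top_imp_at_infinity)
    have ev1: "eventually (\<lambda>l. r (js l) \<le> - ln c / ln (1 + 2 * L (js l))) sequentially"
      using Lpos
    proof eventually_elim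
      case (elim l)
      show ?case by (rule r_bound[where lam="lam (js l)" and d="d (js l)" and eps="eps (js l)"]) (use elim c lam_lt r_range dpos rho_lt in auto)
    qed
    have ev0: "eventually (\<lambda>l. 0 \<le> r (js l)) sequentially"
      using r_range by (auto simp: less_imp_le)
    have rlim: "(\<lambda>l. r (js l)) \<longlonglongrightarrow> 0"
      by (rule tendsto_sandwich[OF ev0 ev1 tendsto_const ub])
    have "(\<lambda>l. (1 - c') powr r (js l)) \<longlonglongrightarrow> (1 - c') powr 0"
      using c' by (intro tendsto_powr[OF tendsto_const rlim]) auto
    then have flim: "(\<lambda>l. (1 - c') powr r (js l)) \<longlonglongrightarrow> 1" using c' by simp
    have "eventually (\<lambda>l. (1 - c') powr r (js l) \<le> rho l) sequentially"
      unfolding rho_def by (intro always_eventually allI rho_ge_c) (use c' r_range in auto)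
    then show ?thesis by (rule tendsto_sandwich[OF _ up flim tendsto_const])
  qed
  moreover have "rho = (\<lambda>l. rho_hat (eps (js l)) (lam (js l)) (L (js l)) (d (js l)) (r (js l)))"
    by (rule ext) (simp add: rho_def)
  ultimately show ?thesis by simp
qed

end
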